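(* The ODMTS design found by Algorithm arc-S1 with expansion rule (d) satisfies the correct adoption property: writing the design as $\mathbf{z} = \mbox{ODMTS-DFD}(\hat{T})$ for the trip set $\hat{T}$ used to obtain it, every rider $r \in \hat{T}$ adopts the ODMTS option in $\mathbf{z}$.
   Context: Setting (On-Demand Multimodal Transit System design with adoption awareness). There is a set $T$ of trips (riders) and a set $H$ of hubs; a network design is a vector $\mathbf{z} \in \{0,1\}^{|H|\times|H|}$ of opened bus arcs $z_{hl}$ satisfying flow balance $\sum_{l} z_{hl} = \sum_l z_{lh}$ for all $h \in H$. The trips split into core trips $T \setminus T'$ (existing riders, always served, always in the considered trip set) and latent trips $T'$; a latent trip $r$ adopts the ODMTS under a design iff its ODMTS travel time is at most $\alpha^r t^r_{cur}$ (its current travel time scaled by $\alpha^r$). ODMTS-DFD$(\hat{T})$ denotes the bilevel design problem with fixed demand $\hat{T} \subseteq T$: minimize $\sum_{h,l} \beta_{hl} z_{hl} + \sum_{r \in \hat{T}} p^r g^r$, where each rider $r \in \hat{T}$ takes a cost-and-convenience-optimal route using opened bus arcs and on-demand shuttle legs; ODMTS-DFD$(\hat{T}, A)$ additionally forces all arcs in $A$ to be opened. The function $eval(\mathbf{z})$ evaluates a design on the full trip set $T$. Algorithm arc-S1 (parametrized by a function Expand): start with $k=0$, $\mathbf{z}_{fixed} = \vec{0}$, $\overline{T}^0 = T \setminus T'$, $B^0 = \infty$. Repeat: solve $\mathbf{z}^k_{temp} = $ ODMTS-DFD$(\overline{T}^k, \{(h,l) : (z_{fixed})_{hl}=1\})$;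 let $Y^k$ be the set of directed cycles in $\mathbf{z}^k_{temp} - \mathbf{z}_{fixed}$; if $Y^k = \emptyset$ stop; otherwise choose $\mathbf{y}^k \in Y^k$ minimizing $eval(\mathbf{z}_{fixed} + \mathbf{y})$ with value $obj^k$; if $obj^k < B^k$ set $B^{k+1} = obj^k$, else stop; set $\mathbf{z}_{fixed} = \mathbf{z}_{fixed} + \mathbf{y}^k$, $\mathbf{z}^k = \mathbf{z}_{fixed}$, $T'^k_{next} = $ Expand$(T', \mathbf{z}^k)$, $\overline{T}^{k+1} = \overline{T}^k \cup T'^k_{next}$, $k=k+1$. Return $\mathbf{z}^k$. The designs $\mathbf{z}^0 \le \mathbf{z}^1 \le \dots$ increase componentwise. Expansion rule (d): Expand$(T', \mathbf{z}^k)$ returns every latent trip $r$ that adopts $\mathbf{z}^k$ and satisfies $UB^r \le \alpha^r t^r_{cur}$, where $UB^r$ is an upper bound (from a result of Basciftci et al. 2021) on the ODMTS travel time of trip $r$ under any design $\mathbf{z}' \ge \mathbf{z}^k$: with $t^1$ the travel time of $r$ under $\mathbf{z}^k$, $d$ distances, $g$ a shuttle time-per-distance factor and $\theta$ the cost/convenience weight, $UB^r = t^1 + \frac{1-\theta}{\theta} g \big(d_{or^r m} + d_{n de^r} - \min_{h,l \in H}\{d_{or^r h} + d_{l de^r}\}\big)$ if $r$ uses a multimodal route with first hub $m$ and last hub $n$, and $UB^r = \max\{t^1, t^1 + \frac{1-\theta}{\theta} g (d_{or^r de^r} - \min_{h,l\in H}\{d_{or^r h} + d_{l de^r}\})\}$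 if $r$ uses a direct shuttle. Consequently, a trip satisfying this condition adopts every design $\mathbf{z}' \ge \mathbf{z}^k$. *)

theory Defs
  imports Complex_Main
begin

text \<open>Hubs and trip endpoints are locations of type 'v; a network design is the set
  of opened bus arcs (the 0/1 vector z), a subset of H x H.\<close>

type_synonym 'v design = "('v \<times> 'v) set"

definition feasible_design :: "'v set \<Rightarrow> 'v design \<Rightarrow> bool" where
  "feasible_design H z \<longleftrightarrow> z \<subseteq> H \<times> H \<and>
     (\<forall>h\<in>H. card {l. (h, l) \<in> z} = card {l. (l, h) \<in> z})"

text \<open>Objective of ODMTS-DFD(That): bus-arc costs plus weighted rider costs g^r,
  where gc z r is the cost/convenience of the optimal route of rider r under z.\<close>

definition dfd_obj ::
  "('v \<times> 'v \<Rightarrow> real) \<Rightarrow> ('t \<Rightarrow> real) \<Rightarrow> ('v design \<Rightarrow> 't \<Rightarrow> real) \<Rightarrow> 't set \<Rightarrow> 'v design \<Rightarrow> real" where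
  "dfd_obj \<beta> p gc That z = (\<Sum>a\<in>z. \<beta> a) + (\<Sum>r\<in>That. p r * gc z r)"

definition is_dfd_solution ::
  "'v set \<Rightarrow> ('v \<times> 'v \<Rightarrow> real) \<Rightarrow> ('t \<Rightarrow> real) \<Rightarrow> ('v design \<Rightarrow> 't \<Rightarrow> real)
     \<Rightarrow> 't set \<Rightarrow> 'v design \<Rightarrow> 'v design \<Rightarrow> bool" where
  "is_dfd_solution H \<beta> p gc That A z \<longleftrightarrow>
     feasible_design H z \<and> A \<subseteq> z \<and>
     (\<forall>z'. feasible_design H z' \<and> A \<subseteq> z' \<longrightarrow> dfd_obj \<beta> p gc That z \<le> dfd_obj \<beta> p gc That z')"

definition directed_cycle :: "'v design \<Rightarrow> 'v design \<Rightarrow> bool" where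
  "directed_cycle C y \<longleftrightarrow>
     (\<exists>vs. length vs \<ge> 2 \<and> distinct vs \<and>
        y = {(vs ! i, vs ! (Suc i mod length vs)) | i. i < length vs}) \<and> y \<subseteq> C"

text \<open>Route type used by a rider: direct shuttle, or multimodal with first hub m, last hub n.\<close>

datatype 'v route = Direct | Multi 'v 'v

definition odmts_UB ::
  "'v set \<Rightarrow> ('v \<Rightarrow> 'v \<Rightarrow> real) \<Rightarrow> real \<Rightarrow> real \<Rightarrow> 'v \<Rightarrow> 'v \<Rightarrow> 'v route \<Rightarrow> real \<Rightarrow> real" where
  "odmts_UB H d g \<theta> src dst rt t1 =
     (let mn = Min {d src h + d l dst | h l. h \<in> H \<and> l \<in> H} in
      case rt of
        Multi m n \<Rightarrow> t1 + (1 - \<theta>) / \<theta> * g * (d src m + d n dst - mn)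
      | Direct \<Rightarrow> max t1 (t1 + (1 - \<theta>) / \<theta> * g * (d src dst - mn)))"

text \<open>Adoption: core trips (not latent) are always served; a latent trip adopts z iff
  its ODMTS travel time under z is at most alpha^r times its current travel time.\<close>

definition adopts ::
  "'t set \<Rightarrow> ('t \<Rightarrow> real) \<Rightarrow> ('t \<Rightarrow> real) \<Rightarrow> ('v design \<Rightarrow> 't \<Rightarrow> real) \<Rightarrow> 'v design \<Rightarrow> 't \<Rightarrow> bool" where
  "adopts T' \<alpha> tcur ttime z r \<longleftrightarrow> r \<notin> T' \<or> ttime z r \<le> \<alpha> r * tcur r"

definition expand_d ::
  "'v set \<Rightarrow> ('v \<Rightarrow> 'v \<Rightarrow> real) \<Rightarrow> real \<Rightarrow> real \<Rightarrow> ('t \<Rightarrow> 'v) \<Rightarrow> ('t \<Rightarrow> 'v)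
    \<Rightarrow> 't set \<Rightarrow> ('t \<Rightarrow> real) \<Rightarrow> ('t \<Rightarrow> real)
    \<Rightarrow> ('v design \<Rightarrow> 't \<Rightarrow> real) \<Rightarrow> ('v design \<Rightarrow> 't \<Rightarrow> 'v route) \<Rightarrow> 'v design \<Rightarrow> 't set" where
  "expand_d H d g \<theta> orig dest T' \<alpha> tcur ttime route z =
     {r \<in> T'. adopts T' \<alpha> tcur ttime z r \<and>
        odmts_UB H d g \<theta> (orig r) (dest r) (route z r) (ttime z r) \<le> \<alpha> r * tcur r}"

end

theory Submission
  imports Defs
begin

lemma cycle_out:
  assumes "distinct vs" "length vs \<ge> 2" "j < length vs"
    "y = {(vs ! i, vs ! (Suc i mod length vs)) | i. i < length vs}"
  shows "{l. (vs ! j, l) \<in> y} = {vs ! (Suc j mod length vs)}"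
  using assms by (auto simp: nth_eq_iff_index_eq)

lemma mod_pred_aux:
  fixes i j L :: nat
  assumes "i < L" "j < L"
  shows "(Suc i mod L = j) = (i = (j + L - 1) mod L)"
proof (cases "Suc i = L")
  case True
  then show ?thesis using assms by (cases j) auto
next
  case False
  then have "Suc i < L" using assms by auto
  then show ?thesis using assms
    by (cases j) (auto simp: mod_if)
qed

lemma cycle_in:
  assumes "distinct vs" "length vs \<ge> 2" "j < length vs"
    "y = {(vs ! i, vs ! (Suc i mod length vs)) | i. i < length vs}"
  shows "{l. (l, vs ! j) \<in> y} = {vs ! ((j + length vs - 1) mod length vs)}"
proof -
  let ?L = "length vs"
  have "(l, vs ! j) \<in> y \<longleftrightarrow> l = vs ! ((j + ?L - 1) mod ?L)" for l
  proof
    assume "(l, vs ! j) \<in> y"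
    then obtain i where i: "i < ?L" "l = vs ! i" "vs ! (Suc i mod ?L) = vs ! j"
      using assms(4) by auto
    have "Suc i mod ?L < ?L" using i(1) by (intro mod_less_divisor) (cases vs, auto)
    then have "Suc i mod ?L = j" using i(3) assms(1,3) by (simp add: nth_eq_iff_index_eq)
    then have "i = (j + ?L - 1) mod ?L" using mod_pred_aux[OF i(1) assms(3)] by simp
    then show "l = vs ! ((j + ?L - 1) mod ?L)" using i by simp
  next
    assume l: "l = vs ! ((j + ?L - 1) mod ?L)"
    define i where "i = (j + ?L - 1) mod ?L"
    have i: "i < ?L" unfolding i_def using assms(2) by (intro mod_less_divisor) (cases vs, auto)
    have "Suc i mod ?L = j" using mod_pred_aux[OF i assms(3)] i_def by simp
    then show "(l, vs ! j) \<in> y" using assms(4) l i i_def by auto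
  qed
  then show ?thesis by auto
qed

lemma cycle_degrees:
  assumes "directed_cycle C y"
  shows "card {l. (h, l) \<in> y} = card {l. (l, h) \<in> y}"
proof -
  obtain vs where vs: "length vs \<ge> 2" "distinct vs"
    "y = {(vs ! i, vs ! (Suc i mod length vs)) | i. i < length vs}"
    using assms unfolding directed_cycle_def by blast
  show ?thesis
  proof (cases "h \<in> set vs")
    case True
    then obtain j where j: "j < length vs" "h = vs ! j" by (auto simp: in_set_conv_nth)
    show ?thesis using cycle_out[OF vs(2,1) j(1) vs(3)] cycle_in[OF vs(2,1) j(1) vs(3)] j by simp
  next
    case False
    have "Suc i mod length vs < length vs" if "i < length vs" for i
      using that by (intro mod_less_divisor) (cases vs, auto)
    then have "{l. (h, l) \<in> y} = {}" "{l. (l, h) \<in> y} = {}" using vs(3) False by (auto simp: in_set_conv_nth)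
    then show ?thesis by simp
  qed
qed

lemma feasible_union:
  assumes fH: "finite H" and fA: "feasible_design H A" and cy: "directed_cycle C y"
    and sub: "y \<subseteq> H \<times> H" and dis: "A \<inter> y = {}"
  shows "feasible_design H (A \<union> y)"
  unfolding feasible_design_def
proof (intro conjI ballI)
  show "A \<union> y \<subseteq> H \<times> H" using fA sub unfolding feasible_design_def by auto
  fix h assume h: "h \<in> H"
  have AH: "A \<subseteq> H \<times> H" using fA unfolding feasible_design_def by auto
  have f1: "finite {l. (h, l) \<in> A}" "finite {l. (h, l) \<in> y}"
    "finite {l. (l, h) \<in> A}" "finite {l. (l, h) \<in> y}"
    using AH sub fH by (auto intro: finite_subset)
  have e1: "{l. (h, l) \<in> A \<union> y} = {l. (h, l) \<in> A} \<union> {l. (h, l) \<in> y}" by auto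
  have e2: "{l. (l, h) \<in> A \<union> y} = {l. (l, h) \<in> A} \<union> {l. (l, h) \<in> y}" by auto
  have "card {l. (h, l) \<in> A \<union> y} = card {l. (h, l) \<in> A} + card {l. (h, l) \<in> y}"
    unfolding e1 using f1 dis by (intro card_Un_disjoint) auto
  moreover have "card {l. (l, h) \<in> A \<union> y} = card {l. (l, h) \<in> A} + card {l. (l, h) \<in> y}"
    unfolding e2 using f1 dis by (intro card_Un_disjoint) auto
  moreover have "card {l. (h, l) \<in> A} = card {l. (l, h) \<in> A}"
    using fA h unfolding feasible_design_def by auto
  moreover have "card {l. (h, l) \<in> y} = card {l. (l, h) \<in> y}" using cycle_degrees[OF cy] .
  ultimately show "card {l. (h, l) \<in> A \<union> y} = card {l. (l, h) \<in> A \<union> y}" by simp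
qed

theorem mainTheorem7:
  fixes H :: "'v set" and T T' :: "'t set"
    and \<beta> :: "'v \<times> 'v \<Rightarrow> real" and p :: "'t \<Rightarrow> real"
    and gc :: "'v design \<Rightarrow> 't \<Rightarrow> real"
    and ttime :: "'v design \<Rightarrow> 't \<Rightarrow> real"
    and route :: "'v design \<Rightarrow> 't \<Rightarrow> 'v route"
    and eval :: "'v design \<Rightarrow> real"
    and d :: "'v \<Rightarrow> 'v \<Rightarrow> real" and g \<theta> :: real
    and orig dest :: "'t \<Rightarrow> 'v"
    and \<alpha> tcur :: "'t \<Rightarrow> real"
    and n :: nat
    and ztemp zfix y :: "nat \<Rightarrow> 'v design"
    and Tbar :: "nat \<Rightarrow> 't set"
  assumes finH: "finite H" and neH: "H \<noteq> {}"
    and finT: "finite T" and latent: "T' \<subseteq> T"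
    and theta: "0 < \<theta>" "\<theta> < 1"
    and basciftci: "\<And>z z' r. feasible_design H z \<Longrightarrow> feasible_design H z' \<Longrightarrow> z \<subseteq> z' \<Longrightarrow>
         r \<in> T' \<Longrightarrow> ttime z' r \<le> odmts_UB H d g \<theta> (orig r) (dest r) (route z r) (ttime z r)"
    and zfix0: "zfix 0 = {}"
    and Tbar0: "Tbar 0 = T - T'"
    and iter: "\<And>k. k < n \<Longrightarrow>
         is_dfd_solution H \<beta> p gc (Tbar k) (zfix k) (ztemp k) \<and>
         directed_cycle (ztemp k - zfix k) (y k) \<and>
         (\<forall>y'. directed_cycle (ztemp k - zfix k) y' \<longrightarrow> eval (zfix k \<union> y k) \<le> eval (zfix k \<union> y')) \<and>
         (k = 0 \<or> eval (zfix k \<union> y k) < eval (zfix (k - 1) \<union> y (k - 1))) \<and>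
         zfix (Suc k) = zfix k \<union> y k \<and>
         Tbar (Suc k) = Tbar k \<union> expand_d H d g \<theta> orig dest T' \<alpha> tcur ttime route (zfix (Suc k))"
    and stop: "is_dfd_solution H \<beta> p gc (Tbar n) (zfix n) (ztemp n) \<and>
         ((\<forall>y'. \<not> directed_cycle (ztemp n - zfix n) y') \<or>
          (\<exists>y'. directed_cycle (ztemp n - zfix n) y' \<and>
             (\<forall>y''. directed_cycle (ztemp n - zfix n) y'' \<longrightarrow> eval (zfix n \<union> y') \<le> eval (zfix n \<union> y'')) \<and>
             0 < n \<and> eval (zfix (n - 1) \<union> y (n - 1)) \<le> eval (zfix n \<union> y')))"
  shows "\<forall>r\<in>Tbar n. adopts T' \<alpha> tcur ttime (zfix n) r"
proof
  have mono: "zfix k \<subseteq> zfix m" if "k \<le> m" "m \<le> n" for k m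
    using that
  proof (induction m)
    case 0 then show ?case by simp
  next
    case (Suc m)
    show ?case
    proof (cases "k = Suc m")
      case True then show ?thesis by simp
    next
      case False
      then have "zfix k \<subseteq> zfix m" using Suc by auto
      moreover have "zfix (Suc m) = zfix m \<union> y m" using iter[of m] Suc.prems by auto
      ultimately show ?thesis by auto
    qed
  qed
  have feas: "feasible_design H (zfix k)" if "k \<le> n" for k
    using that
  proof (induction k)
    case 0 then show ?case by (simp add: zfix0 feasible_design_def)
  next
    case (Suc k)
    then have kn: "k < n" by simp
    note it = iter[OF kn]
    have ft: "feasible_design H (ztemp k)" "zfix k \<subseteq> ztemp k"
      using it unfolding is_dfd_solution_def by auto
    have cy: "directed_cycle (ztemp k - zfix k) (y k)" using it by blast
    have ysub: "y k \<subseteq> ztemp k - zfix k" using cy unfolding directed_cycle_def by blast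
    have "feasible_design H (zfix k \<union> y k)"
      apply (rule feasible_union[OF finH _ cy])
      using Suc ft ysub unfolding feasible_design_def by auto
    then show ?case using it by simp
  qed
  have origin: "\<exists>k<m. r \<in> expand_d H d g \<theta> orig dest T' \<alpha> tcur ttime route (zfix (Suc k))"
    if "r \<in> Tbar m" "r \<in> T'" "m \<le> n" for r m
    using that
  proof (induction m)
    case 0 then show ?case by (simp add: Tbar0)
  next
    case (Suc m)
    have "Tbar (Suc m) = Tbar m \<union> expand_d H d g \<theta> orig dest T' \<alpha> tcur ttime route (zfix (Suc m))"
      using iter[of m] Suc.prems by auto
    then show ?case using Suc by (metis Suc_leD less_Suc_eq UnE)
  qed
  fix r assume r: "r \<in> Tbar n"
  show "adopts T' \<alpha> tcur ttime (zfix n) r"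
  proof (cases "r \<in> T'")
    case False then show ?thesis by (simp add: adopts_def)
  next
    case True
    obtain k where k: "k < n" and e: "r \<in> expand_d H d g \<theta> orig dest T' \<alpha> tcur ttime route (zfix (Suc k))"
      using origin[OF r True] by auto
    have ub: "odmts_UB H d g \<theta> (orig r) (dest r) (route (zfix (Suc k)) r) (ttime (zfix (Suc k)) r) \<le> \<alpha> r * tcur r"
      using e unfolding expand_d_def by auto
    have "ttime (zfix n) r \<le> odmts_UB H d g \<theta> (orig r) (dest r) (route (zfix (Suc k)) r) (ttime (zfix (Suc k)) r)"
      using basciftci[OF feas feas mono True] k by auto
    then show ?thesis using ub by (simp add: adopts_def)
  qed
qed

end
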